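(* Let $P$ and $P'$ be two probability measures on a measurable space $(\Omega,\mathcal A)$. Let $a,b>0$ and let $(\Delta_n)_{n\in\mathbb N}$ be a sequence of positive numbers with $\Delta_n\to\infty$. Set $K_n:=\lceil an^2\rceil$. Suppose that for all sufficiently large $n\in\mathbb N$ there are random variables $X^n_k$, $k\in\{1,\dots,K_n\}$, on $(\Omega,\mathcal A)$ which are pairwise uncorrelated in $k$ both under $P$ and under $P'$, satisfy $|X^n_k|\le b$, and satisfy $$E_{P'}[X^n_k]-E_P[X^n_k]\ge\tfrac1n\Delta_n,\qquad k\in\{1,\dots,K_n\}.$$ Then $P$ and $P'$ are mutually singular. *)

theory Defs
  imports "HOL-Probability.Probability"
begin

definition mutually_singular :: "'a measure \<Rightarrow> 'a measure \<Rightarrow> bool" where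
  "mutually_singular M N \<longleftrightarrow>
     (\<exists>A \<in> sets M. emeasure M A = 0 \<and> emeasure N (space M - A) = 0)"

definition pairwise_uncorrelated :: "'a measure \<Rightarrow> 'i set \<Rightarrow> ('i \<Rightarrow> 'a \<Rightarrow> real) \<Rightarrow> bool" where
  "pairwise_uncorrelated M I X \<longleftrightarrow>
     (\<forall>k\<in>I. \<forall>l\<in>I. k \<noteq> l \<longrightarrow>
        (\<integral>\<omega>. X k \<omega> * X l \<omega> \<partial>M) = (\<integral>\<omega>. X k \<omega> \<partial>M) * (\<integral>\<omega>. X l \<omega> \<partial>M))"

end

theory Submission imports Defs begin
lemma (in prob_space) avg_cheb:
  fixes X :: "nat \<Rightarrow> 'a \<Rightarrow> real" and b e :: real
  assumes fin: "finite I" and ne: "I \<noteq> {}"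
    and meas: "\<And>k. k \<in> I \<Longrightarrow> X k \<in> borel_measurable M"
    and bnd: "\<And>k \<omega>. k \<in> I \<Longrightarrow> \<omega> \<in> space M \<Longrightarrow> \<bar>X k \<omega>\<bar> \<le> b"
    and unc: "pairwise_uncorrelated M I X" and e: "e > 0"
  shows "prob {\<omega>\<in>space M. e \<le> \<bar>(\<Sum>k\<in>I. X k \<omega>)/card I - (\<Sum>k\<in>I. expectation (X k))/card I\<bar>}
           \<le> b^2/(card I * e^2)"
proof -
  define c where "c k = expectation (X k)" for k
  define Y where "Y k \<omega> = X k \<omega> - c k" for k \<omega>
  define S where "S \<omega> = (\<Sum>k\<in>I. X k \<omega>)/card I" for \<omega>
  have cI: "real (card I) > 0" using fin ne by (simp add: card_gt_0_iff)
  have intX: "integrable M (X k)" if "k\<in>I" for k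
    using bnd[OF that] meas[OF that] by (intro integrable_const_bound[where B=b]) auto
  have measY: "Y k \<in> borel_measurable M" if "k\<in>I" for k
    using meas[OF that] unfolding Y_def by measurable
  have bY: "\<bar>Y k \<omega>\<bar> \<le> b + \<bar>c k\<bar>" if "k\<in>I" "\<omega>\<in>space M" for k \<omega>
    using bnd[OF that] unfolding Y_def by auto
  have intYY: "integrable M (\<lambda>\<omega>. Y k \<omega> * Y l \<omega>)" if "k\<in>I" "l\<in>I" for k l
  proof (rule integrable_const_bound[where B="(b + \<bar>c k\<bar>) * (b + \<bar>c l\<bar>)"])
    show "AE x in M. norm (Y k x * Y l x) \<le> (b + \<bar>c k\<bar>) * (b + \<bar>c l\<bar>)"
    proof (intro AE_I2)
      fix x assume x: "x \<in> space M"
      have "\<bar>Y k x\<bar> * \<bar>Y l x\<bar> \<le> (b + \<bar>c k\<bar>) * (b + \<bar>c l\<bar>)"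
        using bY[OF that(1) x] bY[OF that(2) x] by (intro mult_mono) (auto intro: order_trans[OF abs_ge_zero])
      then show "norm (Y k x * Y l x) \<le> (b + \<bar>c k\<bar>) * (b + \<bar>c l\<bar>)" by (simp add: abs_mult)
    qed
    show "(\<lambda>\<omega>. Y k \<omega> * Y l \<omega>) \<in> borel_measurable M"
      using measY[OF that(1)] measY[OF that(2)] by measurable
  qed
  have intXX: "integrable M (\<lambda>\<omega>. X k \<omega> * X l \<omega>)" if "k\<in>I" "l\<in>I" for k l
  proof (rule integrable_const_bound[where B="b * b"])
    show "AE x in M. norm (X k x * X l x) \<le> b * b"
    proof (intro AE_I2)
      fix x assume x: "x \<in> space M"
      have "\<bar>X k x\<bar> * \<bar>X l x\<bar> \<le> b * b"
        using bnd[OF that(1) x] bnd[OF that(2) x] by (intro mult_mono) (auto intro: order_trans[OF abs_ge_zero])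
      then show "norm (X k x * X l x) \<le> b * b" by (simp add: abs_mult)
    qed
    show "(\<lambda>\<omega>. X k \<omega> * X l \<omega>) \<in> borel_measurable M"
      using meas[OF that(1)] meas[OF that(2)] by measurable
  qed
  have cross: "expectation (\<lambda>\<omega>. Y k \<omega> * Y l \<omega>) = 0" if "k\<in>I" "l\<in>I" "k \<noteq> l" for k l
  proof -
    have eq: "(\<lambda>\<omega>. Y k \<omega> * Y l \<omega>) = (\<lambda>\<omega>. X k \<omega> * X l \<omega> - c l * X k \<omega> - c k * X l \<omega> + c k * c l)"
      unfolding Y_def by (auto simp: algebra_simps)
    have "expectation (\<lambda>\<omega>. Y k \<omega> * Y l \<omega>) = expectation (\<lambda>\<omega>. X k \<omega> * X l \<omega>) - c l * c k - c k * c l + c k * c l"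
      unfolding eq using intX[OF that(1)] intX[OF that(2)] intXX[OF that(1,2)] prob_space
      by (simp add: c_def)
    also have "expectation (\<lambda>\<omega>. X k \<omega> * X l \<omega>) = c k * c l"
      using unc that unfolding pairwise_uncorrelated_def c_def by blast
    finally show ?thesis by simp
  qed
  have diag: "expectation (\<lambda>\<omega>. Y k \<omega> * Y k \<omega>) \<le> b^2" if "k\<in>I" for k
  proof -
    have intX2: "integrable M (\<lambda>\<omega>. (X k \<omega>)^2)"
      using intXX[OF that that] by (simp add: power2_eq_square)
    have "expectation (\<lambda>\<omega>. Y k \<omega> * Y k \<omega>) = variance (X k)"
      unfolding Y_def c_def by (simp add: power2_eq_square)
    also have "\<dots> = expectation (\<lambda>\<omega>. (X k \<omega>)^2) - (expectation (X k))^2"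
      using intX[OF that] intX2 by (rule variance_eq)
    also have "\<dots> \<le> expectation (\<lambda>\<omega>. (X k \<omega>)^2)" by simp
    also have "\<dots> \<le> b^2"
    proof (rule integral_le_const[OF intX2], intro AE_I2)
      fix \<omega> assume "\<omega> \<in> space M"
      then have "\<bar>X k \<omega>\<bar> \<le> b" using bnd that by blast
      then have "\<bar>X k \<omega>\<bar>^2 \<le> b^2" by (intro power_mono) auto
      then show "(X k \<omega>)^2 \<le> b^2" by simp
    qed
    finally show ?thesis .
  qed
  have ES: "expectation S = (\<Sum>k\<in>I. c k)/card I"
    unfolding S_def c_def using intX by (simp add: integral_sum)
  have measS: "S \<in> borel_measurable M"
    unfolding S_def using meas by measurable
  have diffS: "S \<omega> - expectation S = (\<Sum>k\<in>I. Y k \<omega>) / card I" for \<omega>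
    unfolding ES S_def Y_def by (simp add: sum_subtractf diff_divide_distrib)
  have sq: "(S \<omega> - expectation S)^2 = (\<Sum>k\<in>I. \<Sum>l\<in>I. Y k \<omega> * Y l \<omega>) / (card I)^2" for \<omega>
    unfolding diffS by (simp add: power_divide power2_eq_square sum_product)
  have var: "variance S = (\<Sum>k\<in>I. \<Sum>l\<in>I. expectation (\<lambda>\<omega>. Y k \<omega> * Y l \<omega>)) / (card I)^2"
    unfolding sq using intYY by (simp add: integral_sum)
  also have "(\<Sum>k\<in>I. \<Sum>l\<in>I. expectation (\<lambda>\<omega>. Y k \<omega> * Y l \<omega>)) = (\<Sum>k\<in>I. expectation (\<lambda>\<omega>. Y k \<omega> * Y k \<omega>))"
  proof (rule sum.cong[OF refl])
    fix k assume k: "k \<in> I"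
    have "(\<Sum>l\<in>I. expectation (\<lambda>\<omega>. Y k \<omega> * Y l \<omega>)) = (\<Sum>l\<in>I. if l = k then expectation (\<lambda>\<omega>. Y k \<omega> * Y k \<omega>) else 0)"
      using cross k by (intro sum.cong) auto
    also have "\<dots> = expectation (\<lambda>\<omega>. Y k \<omega> * Y k \<omega>)" using fin k by simp
    finally show "(\<Sum>l\<in>I. expectation (\<lambda>\<omega>. Y k \<omega> * Y l \<omega>)) = expectation (\<lambda>\<omega>. Y k \<omega> * Y k \<omega>)" .
  qed
  also have "(\<Sum>k\<in>I. expectation (\<lambda>\<omega>. Y k \<omega> * Y k \<omega>)) \<le> (\<Sum>k\<in>I. b^2)"
    using diag by (intro sum_mono) auto
  finally have "variance S \<le> card I * b^2 / (card I)^2"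
    using cI by (simp add: divide_right_mono)
  also have "\<dots> = b^2 / card I" using cI by (simp add: power2_eq_square)
  finally have varS: "variance S \<le> b^2 / card I" .
  have intS2: "integrable M (\<lambda>\<omega>. (S \<omega>)^2)"
  proof -
    have "integrable M (\<lambda>\<omega>. (\<Sum>k\<in>I. \<Sum>l\<in>I. X k \<omega> * X l \<omega>) / (card I)^2)"
      using intXX by auto
    moreover have "(\<lambda>\<omega>. (S \<omega>)^2) = (\<lambda>\<omega>. (\<Sum>k\<in>I. \<Sum>l\<in>I. X k \<omega> * X l \<omega>) / (card I)^2)"
      unfolding S_def by (simp add: power_divide power2_eq_square sum_product)
    ultimately show ?thesis by simp
  qed
  have "prob {\<omega>\<in>space M. \<bar>S \<omega> - expectation S\<bar> \<ge> e} \<le> variance S / e^2"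
    using measS intS2 e by (intro Chebyshev_inequality) auto
  also have "\<dots> \<le> (b^2 / card I) / e^2" using divide_right_mono[OF varS, of "e^2"] by simp
  finally show ?thesis
    unfolding S_def ES c_def by (simp add: field_simps)
qed

lemma sing_from_eps:
  fixes P P' :: "'a measure"
  assumes pP: "prob_space P" and pP': "prob_space P'" and se: "sets P' = sets P"
   and ex: "\<And>j::nat. \<exists>A\<in>sets P. measure P A \<le> (1/2)^j \<and> measure P' (space P - A) \<le> (1/2)^j"
  shows "mutually_singular P P'"
proof -
  obtain A where A: "\<And>j. A j \<in> sets P" "\<And>j. measure P (A j) \<le> (1/2)^j"
      "\<And>j. measure P' (space P - A j) \<le> (1/2)^j"
    using ex by metis
  interpret p: prob_space P by fact
  interpret q: prob_space P' by fact
  have sp: "space P' = space P" using sets_eq_imp_space_eq[OF se] .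
  define C where "C j = space P - A j" for j
  have C: "C j \<in> sets P'" for j unfolding C_def se sp using A(1) by auto
  have geo: "summable (\<lambda>n::nat. (1/2::real)^n)" by (rule summable_geometric) simp
  have nA: "limsup A \<in> null_sets P"
  proof (rule borel_cantelli_limsup1)
    show "summable (\<lambda>n. measure P (A n))"
      by (rule summable_comparison_test[OF _ geo]) (use A(2) in auto)
  qed (use A(1) in \<open>auto simp: less_top[symmetric]\<close>)
  have nC: "limsup C \<in> null_sets P'"
  proof (rule borel_cantelli_limsup1)
    show "summable (\<lambda>n. measure P' (C n))"
      by (rule summable_comparison_test[OF _ geo]) (use A(3) in \<open>auto simp: C_def\<close>)
  qed (use C in \<open>auto simp: less_top[symmetric]\<close>)
  have sub: "space P - limsup A \<subseteq> limsup C"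
  proof
    fix x assume x: "x \<in> space P - limsup A"
    then obtain n0 where n0: "\<And>k. k \<ge> n0 \<Longrightarrow> x \<notin> A k" by (auto simp: limsup_INF_SUP)
    show "x \<in> limsup C" unfolding limsup_INF_SUP
    proof (intro INT_I UN_I)
      fix n show "max n n0 \<in> {n..}" by simp
      show "x \<in> C (max n n0)" using x n0[of "max n n0"] by (auto simp: C_def)
    qed
  qed
  have mA: "limsup A \<in> sets P" using nA by auto
  have "space P - limsup A \<in> null_sets P'"
    by (rule null_sets_subset[OF nC _ sub]) (use mA se sp in auto)
  then show ?thesis unfolding mutually_singular_def using nA mA by auto
qed

theorem lemma4:
  fixes P P' :: "'a measure" and a b :: real and \<Delta> :: "nat \<Rightarrow> real"
  assumes "prob_space P" and "prob_space P'"
    and "sets P' = sets P"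
    and "a > 0" and "b > 0"
    and "\<And>n. \<Delta> n > 0"
    and "filterlim \<Delta> at_top sequentially"
    and "\<exists>N. \<forall>n\<ge>N. \<exists>X :: nat \<Rightarrow> 'a \<Rightarrow> real.
           (\<forall>k\<in>{1..nat \<lceil>a * real n ^ 2\<rceil>}.
              X k \<in> borel_measurable P \<and>
              (\<forall>\<omega>\<in>space P. \<bar>X k \<omega>\<bar> \<le> b) \<and>
              (\<integral>\<omega>. X k \<omega> \<partial>P') - (\<integral>\<omega>. X k \<omega> \<partial>P) \<ge> \<Delta> n / real n) \<and>
           pairwise_uncorrelated P {1..nat \<lceil>a * real n ^ 2\<rceil>} X \<and>
           pairwise_uncorrelated P' {1..nat \<lceil>a * real n ^ 2\<rceil>} X"
  shows "mutually_singular P P'"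
proof (rule sing_from_eps[OF assms(1,2,3)])
  interpret p: prob_space P by fact
  interpret q: prob_space P' by fact
  have se: "sets P' = sets P" by fact
  have sp: "space P' = space P" using sets_eq_imp_space_eq[OF se] .
  have mc: "measurable P' borel = measurable P borel" by (rule measurable_cong_sets[OF se refl])
  fix j :: nat
  define \<epsilon> :: real where "\<epsilon> = (1/2)^j"
  have \<epsilon>: "\<epsilon> > 0" unfolding \<epsilon>_def by simp
  define T where "T = 4*b^2/(a*\<epsilon>) + 1"
  obtain N where HN: "\<forall>n\<ge>N. \<exists>X :: nat \<Rightarrow> 'a \<Rightarrow> real.
           (\<forall>k\<in>{1..nat \<lceil>a * real n ^ 2\<rceil>}.
              X k \<in> borel_measurable P \<and>
              (\<forall>\<omega>\<in>space P. \<bar>X k \<omega>\<bar> \<le> b) \<and>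
              (\<integral>\<omega>. X k \<omega> \<partial>P') - (\<integral>\<omega>. X k \<omega> \<partial>P) \<ge> \<Delta> n / real n) \<and>
           pairwise_uncorrelated P {1..nat \<lceil>a * real n ^ 2\<rceil>} X \<and>
           pairwise_uncorrelated P' {1..nat \<lceil>a * real n ^ 2\<rceil>} X"
    using assms(8) by blast
  have "eventually (\<lambda>n. T \<le> \<Delta> n) sequentially"
    using assms(7) by (simp add: filterlim_at_top)
  then obtain M where M: "\<And>n. n \<ge> M \<Longrightarrow> T \<le> \<Delta> n" by (auto simp: eventually_sequentially)
  define n where "n = max (max N M) 1"
  have n1: "n \<ge> 1" and nN: "n \<ge> N" and TD: "T \<le> \<Delta> n" using M unfolding n_def by auto
  define K where "K = nat \<lceil>a * real n ^ 2\<rceil>"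
  define I where "I = {1..K}"
  obtain X :: "nat \<Rightarrow> 'a \<Rightarrow> real" where
    X: "\<And>k. k \<in> I \<Longrightarrow> X k \<in> borel_measurable P"
       "\<And>k \<omega>. k \<in> I \<Longrightarrow> \<omega> \<in> space P \<Longrightarrow> \<bar>X k \<omega>\<bar> \<le> b"
       "\<And>k. k \<in> I \<Longrightarrow> (\<integral>\<omega>. X k \<omega> \<partial>P') - (\<integral>\<omega>. X k \<omega> \<partial>P) \<ge> \<Delta> n / real n"
       and uP: "pairwise_uncorrelated P I X" and uP': "pairwise_uncorrelated P' I X"
    using HN nN unfolding I_def K_def by blast
  have an: "a * real n ^ 2 > 0" using assms(4) n1 by simp
  have Kge: "real K \<ge> a * real n ^ 2" unfolding K_def by linarith
  have cI: "card I = K" unfolding I_def by simp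
  have K0: "real K > 0" using Kge an by linarith
  have fin: "finite I" and ne: "I \<noteq> {}" unfolding I_def using K0 by auto
  define d where "d = \<Delta> n / real n"
  have d: "d > 0" unfolding d_def using assms(6)[of n] n1 by simp
  define e where "e = d / 2"
  have e: "e > 0" using d unfolding e_def by simp
  define S where "S \<omega> = (\<Sum>k\<in>I. X k \<omega>) / card I" for \<omega>
  define m where "m = (\<Sum>k\<in>I. p.expectation (X k)) / card I"
  define m' where "m' = (\<Sum>k\<in>I. q.expectation (X k)) / card I"
  have "(\<Sum>k\<in>I. d) \<le> (\<Sum>k\<in>I. q.expectation (X k) - p.expectation (X k))"
    using X(3) unfolding d_def by (intro sum_mono) auto
  then have "real K * d \<le> (\<Sum>k\<in>I. q.expectation (X k)) - (\<Sum>k\<in>I. p.expectation (X k))"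
    using cI by (simp add: sum_subtractf)
  then have mm: "m' - m \<ge> d"
    unfolding m_def m'_def cI using K0 by (simp add: diff_divide_distrib[symmetric] pos_le_divide_eq mult.commute)
  define A where "A = {\<omega>\<in>space P. m + e \<le> S \<omega>}"
  have measS: "S \<in> borel_measurable P" unfolding S_def using X(1) by measurable
  have Am: "A \<in> sets P" unfolding A_def using measS by measurable
  have bound: "b^2 / (card I * e^2) \<le> \<epsilon>"
  proof -
    have "real K * e^2 \<ge> a * real n ^ 2 * e^2" using Kge by (intro mult_right_mono) auto
    also have "a * real n ^ 2 * e^2 = a * \<Delta> n ^ 2 / 4"
      unfolding e_def d_def using n1 by (simp add: field_simps power2_eq_square)
    also have "a * \<Delta> n ^ 2 / 4 \<ge> a * T / 4"
    proof -
      have T1: "T \<ge> 1" unfolding T_def using assms(4) \<epsilon> by (simp add: zero_le_divide_iff)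
      have "\<Delta> n ^ 2 \<ge> \<Delta> n" using TD T1 by (simp add: power2_eq_square)
      then have "\<Delta> n ^ 2 \<ge> T" using TD by linarith
      then show ?thesis using assms(4) by simp
    qed
    also have "a * T / 4 \<ge> b^2 / \<epsilon>"
      unfolding T_def using assms(4) \<epsilon> by (simp add: field_simps)
    finally have ge: "real K * e^2 \<ge> b^2 / \<epsilon>" .
    have pos: "b^2/\<epsilon> > 0" using assms(5) \<epsilon> by simp
    have "b^2 / (real K * e^2) \<le> b^2 / (b^2/\<epsilon>)"
    proof (rule divide_left_mono[OF ge])
      show "0 \<le> b^2" by simp
      show "0 < real K * e^2 * (b^2/\<epsilon>)" by (intro mult_pos_pos) (use pos K0 e in auto)
    qed
    also have "\<dots> = \<epsilon>" using assms(5) by simp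
    finally show ?thesis using cI by simp
  qed
  have "measure P A \<le> p.prob {\<omega>\<in>space P. e \<le> \<bar>S \<omega> - m\<bar>}"
  proof (rule p.finite_measure_mono)
    show "A \<subseteq> {\<omega>\<in>space P. e \<le> \<bar>S \<omega> - m\<bar>}" unfolding A_def by auto
    show "{\<omega>\<in>space P. e \<le> \<bar>S \<omega> - m\<bar>} \<in> sets P" using measS by measurable
  qed
  also have "\<dots> \<le> b^2 / (card I * e^2)"
    unfolding S_def m_def
    by (rule p.avg_cheb[OF fin ne X(1) X(2) uP e])
  finally have PA: "measure P A \<le> \<epsilon>" using bound by linarith
  have "measure P' (space P - A) \<le> q.prob {\<omega>\<in>space P'. e \<le> \<bar>S \<omega> - m'\<bar>}"
  proof (rule q.finite_measure_mono)
    show "space P - A \<subseteq> {\<omega>\<in>space P'. e \<le> \<bar>S \<omega> - m'\<bar>}"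
      unfolding A_def sp using mm unfolding e_def by (auto simp: abs_if)
    show "{\<omega>\<in>space P'. e \<le> \<bar>S \<omega> - m'\<bar>} \<in> sets P'" using measS unfolding mc[symmetric] by measurable
  qed
  also have "\<dots> \<le> b^2 / (card I * e^2)"
    unfolding S_def m'_def
    by (rule q.avg_cheb[OF fin ne _ _ uP' e]) (use X(1,2) mc sp in auto)
  finally have PA': "measure P' (space P - A) \<le> \<epsilon>" using bound by linarith
  show "\<exists>A\<in>sets P. measure P A \<le> (1/2)^j \<and> measure P' (space P - A) \<le> (1/2)^j"
    using Am PA PA' unfolding \<epsilon>_def by blast
qed

end
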